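(* Consider three agents $a,b,c$, each starting with an input value in $\{0,1\}$ (all $8$ input assignments are possible), communicating for exactly one round in the full-information test-and-set model described in the context. There is no decision protocol solving the (0-)majority consensus task in one round: there is no family of functions $\delta_i$ ($i\in\{a,b,c\}$), mapping the possible local states of agent $i$ after one round to $\{0,1\}$, such that for every input assignment and every communication graph of the test-and-set model, the output triple $(\delta_a(\ell_a),\delta_b(\ell_b),\delta_c(\ell_c))$ satisfies both majority agreement and validity.
   Context: Agents: $\mathrm{Ag}=\{a,b,c\}$. A communication graph is a reflexive relation $G \subseteq \mathrm{Ag}\times\mathrm{Ag}$; write $j \to i$ for $(j,i)\in G$. Full-information round: initially the local state of agent $i$ is its input value $x_i$; after a round with graph $G$, the local state of agent $i$ is the tuple $(m_a,m_b,m_c)$ where $m_j=x_j$ if $j\to i$ in $G$ and $m_j=\bot$ otherwise. The graph is chosen arbitrarily from the model's set of graphs. The test-and-set model consists of $9$ graphs: choose a winner $w\in\mathrm{Ag}$, and let $u,v$ be the two other agents (losers); besides reflexive loops, the graph contains $w\to u$ and $w\to v$ (the winner receives from no one), and among the losers either only $u\to v$, or only $v\to u$, or both $u\to v$ and $v\to u$. Majority consensus task: each agent outputs a value in $\{0,1\}$ computed only from its local state; (majority agreement) either all three outputs are equal, or at least two of the outputs are $0$; (validity) every output value is one of the input values of the execution (in particular, if all inputs equal $v$ then all outputs equal $v$). *)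

theory Defs
  imports Main
begin

datatype agent = Ag_a | Ag_b | Ag_c

type_synonym graph = "(agent \<times> agent) set"

definition local_state :: "graph \<Rightarrow> (agent \<Rightarrow> nat) \<Rightarrow> agent \<Rightarrow> (agent \<Rightarrow> nat option)" where
  "local_state G x i = (\<lambda>j. if (j, i) \<in> G then Some (x j) else None)"

text \<open>Test-and-set graph with winner w and losers u, v: reflexive loops, w -> u, w -> v,
  and among losers only u -> v, only v -> u, or both.\<close>
definition tas_graphs :: "graph set" where
  "tas_graphs = {G. \<exists>w u v. distinct [w, u, v] \<and>
      (G = Id \<union> {(w,u),(w,v),(u,v)} \<or>
       G = Id \<union> {(w,u),(w,v),(v,u)} \<or>
       G = Id \<union> {(w,u),(w,v),(u,v),(v,u)})}"

definition input_assignments :: "(agent \<Rightarrow> nat) set" where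
  "input_assignments = {x. \<forall>i. x i \<in> {0,1}}"

definition majority_agreement :: "(agent \<Rightarrow> nat) \<Rightarrow> bool" where
  "majority_agreement y \<longleftrightarrow> (y Ag_a = y Ag_b \<and> y Ag_b = y Ag_c) \<or>
      card {i. y i = 0} \<ge> 2"

definition validity :: "(agent \<Rightarrow> nat) \<Rightarrow> (agent \<Rightarrow> nat) \<Rightarrow> bool" where
  "validity x y \<longleftrightarrow> (\<forall>i. \<exists>j. y i = x j)"

definition solves_majority_consensus :: "(agent \<Rightarrow> (agent \<Rightarrow> nat option) \<Rightarrow> nat) \<Rightarrow> bool" where
  "solves_majority_consensus \<delta> \<longleftrightarrow>
     (\<forall>x \<in> input_assignments. \<forall>G \<in> tas_graphs.
        let y = (\<lambda>i. \<delta> i (local_state G x i)) in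
        (\<forall>i. y i \<in> {0,1}) \<and> majority_agreement y \<and> validity x y)"

end

theory Submission
  imports Defs
begin

definition ls :: "'b \<Rightarrow> 'b \<Rightarrow> 'b \<Rightarrow> agent \<Rightarrow> 'b" where
  "ls p q r = (\<lambda>j. case j of Ag_a \<Rightarrow> p | Ag_b \<Rightarrow> q | Ag_c \<Rightarrow> r)"

lemma ls_simps[simp]: "ls p q r Ag_a = p" "ls p q r Ag_b = q" "ls p q r Ag_c = r"
  by (simp_all add: ls_def)

lemma local_state_ls:
  "local_state G x i = ls (if (Ag_a,i)\<in>G then Some (x Ag_a) else None)
     (if (Ag_b,i)\<in>G then Some (x Ag_b) else None) (if (Ag_c,i)\<in>G then Some (x Ag_c) else None)"
  unfolding local_state_def ls_def by (rule ext) (simp split: agent.split)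

lemma ex_agent: "(\<exists>j. P j) = (P Ag_a \<or> P Ag_b \<or> P Ag_c)"
  by (metis agent.exhaust)
lemma all_agent: "(\<forall>j. P j) = (P Ag_a \<and> P Ag_b \<and> P Ag_c)"
  by (metis agent.exhaust)

lemma UNIV_agent: "(UNIV :: agent set) = {Ag_a, Ag_b, Ag_c}"
  using agent.exhaust by blast

lemma maj_iff: "majority_agreement y \<longleftrightarrow> (y Ag_a = y Ag_b \<and> y Ag_b = y Ag_c) \<or>
   (y Ag_a = 0 \<and> y Ag_b = 0) \<or> (y Ag_a = 0 \<and> y Ag_c = 0) \<or> (y Ag_b = 0 \<and> y Ag_c = 0)"
proof -
  have S: "{i. y i = 0} = (if y Ag_a = 0 then {Ag_a} else {}) \<union> (if y Ag_b = 0 then {Ag_b} else {})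
     \<union> (if y Ag_c = 0 then {Ag_c} else {})"
    by (rule set_eqI, case_tac x) auto
  show ?thesis unfolding majority_agreement_def S
    by (cases "y Ag_a = 0"; cases "y Ag_b = 0"; cases "y Ag_c = 0") simp_all
qed

lemma step:
  assumes "solves_majority_consensus \<delta>" "x \<in> input_assignments" "G \<in> tas_graphs"
  shows "let y = (\<lambda>i. \<delta> i (local_state G x i)) in
        (\<forall>i. y i \<in> {0,1}) \<and> majority_agreement y \<and> validity x y"
  using assms unfolding solves_majority_consensus_def by blast

lemma inp_in: "a \<in> {0,1} \<Longrightarrow> b \<in> {0,1} \<Longrightarrow> c \<in> {0,1} \<Longrightarrow> ls a b c \<in> input_assignments"
  unfolding input_assignments_def by (simp add: all_agent)

lemma tas1: "distinct [w,u,v] \<Longrightarrow> Id \<union> {(w,u),(w,v),(u,v)} \<in> tas_graphs"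
  unfolding tas_graphs_def by (rule CollectI, rule exI[of _ w], rule exI[of _ u], rule exI[of _ v]) simp
lemma tas2: "distinct [w,u,v] \<Longrightarrow> Id \<union> {(w,u),(w,v),(v,u)} \<in> tas_graphs"
  unfolding tas_graphs_def by (rule CollectI, rule exI[of _ w], rule exI[of _ u], rule exI[of _ v]) simp
lemma tas3: "distinct [w,u,v] \<Longrightarrow> Id \<union> {(w,u),(w,v),(u,v),(v,u)} \<in> tas_graphs"
  unfolding tas_graphs_def by (rule CollectI, rule exI[of _ w], rule exI[of _ u], rule exI[of _ v]) simp



lemmas inst = step[simplified Let_def local_state_ls maj_iff validity_def all_agent ex_agent]

theorem mainTheorem2:
  shows "\<not> (\<exists>\<delta>. solves_majority_consensus \<delta>)"
proof
  assume "\<exists>\<delta>. solves_majority_consensus \<delta>"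
  then obtain \<delta> where d: "solves_majority_consensus \<delta>" by blast
  note e1 = inst[OF d inp_in[of 0 0 0] tas3[of Ag_c Ag_a Ag_b], simplified]
  note e2 = inst[OF d inp_in[of 1 1 0] tas3[of Ag_a Ag_b Ag_c], simplified]
  note e3 = inst[OF d inp_in[of 1 1 0] tas1[of Ag_b Ag_a Ag_c], simplified]
  note e4 = inst[OF d inp_in[of 1 1 0] tas3[of Ag_b Ag_a Ag_c], simplified]
  note e5 = inst[OF d inp_in[of 1 1 0] tas3[of Ag_c Ag_a Ag_b], simplified]
  note e6 = inst[OF d inp_in[of 1 1 1] tas3[of Ag_a Ag_b Ag_c], simplified]
  note e7 = inst[OF d inp_in[of 1 1 1] tas1[of Ag_b Ag_a Ag_c], simplified]
  show False using e1 e2 e3 e4 e5 e6 e7 by auto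
qed
end
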